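(* Let $P$ satisfy (S1)–(S4). Then every element $\bar h\in H$ is both a $[2,t]$-commutator and a $[-2,t]$-commutator, i.e. there are $\bar g_1,\bar g_2\in H$ with $\bar h=\bar g_1\alpha(\bar g_1^{-1})\bar g_2\alpha(\bar g_2^{-1})$ and there are $\bar g_1',\bar g_2'\in H$ with $\bar h=\alpha(\bar g_1')\bar g_1'^{-1}\alpha(\bar g_2')\bar g_2'^{-1}$.
   Context: Conditions on a finite group $P$: (S1) for all $a_1,a_2\in P$ there are $x,y$ with $a_2=x^{-1}a_1^{-1}yxy^{-1}$; (S2) for all $a_1,a_2,a_3$ there are $u,v$ with $a_2=a_3ua_1^{-1}a_3^{-1}vu^{-1}v^{-1}$; (S3) for all $u_1,u_2,u_3,u_4\ne1$ there are $x,y,z$ with $u_4=x^{-1}u_1xy^{-1}u_2yz^{-1}u_3z$; (S4) there are $u_1,u_2,u_3\ne1$ such that there are no $x,y$ with $u_3=x^{-1}u_2^{-1}xy^{-1}u_1^{-1}y$. $H=\bigoplus_{i\in\mathbb Z}H_i$, each $H_i$ a copy of $P$, elements finitely supported sequences $(h_i)_{i\in\mathbb Z}$ with coordinatewise multiplication; $\alpha\in\mathrm{Aut}(H)$ is $\alpha((h_i)_i)=(h_{i+1})_i$. *)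

theory Defs
  imports "HOL-Algebra.Group"
begin

definition S1 :: "('a, 'b) monoid_scheme \<Rightarrow> bool" where
  "S1 P \<longleftrightarrow> (\<forall>a1\<in>carrier P. \<forall>a2\<in>carrier P. \<exists>x\<in>carrier P. \<exists>y\<in>carrier P.
      a2 = inv\<^bsub>P\<^esub> x \<otimes>\<^bsub>P\<^esub> inv\<^bsub>P\<^esub> a1 \<otimes>\<^bsub>P\<^esub> y \<otimes>\<^bsub>P\<^esub> x \<otimes>\<^bsub>P\<^esub> inv\<^bsub>P\<^esub> y)"

definition S2 :: "('a, 'b) monoid_scheme \<Rightarrow> bool" where
  "S2 P \<longleftrightarrow> (\<forall>a1\<in>carrier P. \<forall>a2\<in>carrier P. \<forall>a3\<in>carrier P. \<exists>u\<in>carrier P. \<exists>v\<in>carrier P.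
      a2 = a3 \<otimes>\<^bsub>P\<^esub> u \<otimes>\<^bsub>P\<^esub> inv\<^bsub>P\<^esub> a1 \<otimes>\<^bsub>P\<^esub> inv\<^bsub>P\<^esub> a3 \<otimes>\<^bsub>P\<^esub> v
           \<otimes>\<^bsub>P\<^esub> inv\<^bsub>P\<^esub> u \<otimes>\<^bsub>P\<^esub> inv\<^bsub>P\<^esub> v)"

definition S3 :: "('a, 'b) monoid_scheme \<Rightarrow> bool" where
  "S3 P \<longleftrightarrow> (\<forall>u1\<in>carrier P. \<forall>u2\<in>carrier P. \<forall>u3\<in>carrier P. \<forall>u4\<in>carrier P.
      u1 \<noteq> \<one>\<^bsub>P\<^esub> \<longrightarrow> u2 \<noteq> \<one>\<^bsub>P\<^esub> \<longrightarrow> u3 \<noteq> \<one>\<^bsub>P\<^esub> \<longrightarrow> u4 \<noteq> \<one>\<^bsub>P\<^esub> \<longrightarrow>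
      (\<exists>x\<in>carrier P. \<exists>y\<in>carrier P. \<exists>z\<in>carrier P.
        u4 = inv\<^bsub>P\<^esub> x \<otimes>\<^bsub>P\<^esub> u1 \<otimes>\<^bsub>P\<^esub> x \<otimes>\<^bsub>P\<^esub> inv\<^bsub>P\<^esub> y \<otimes>\<^bsub>P\<^esub> u2 \<otimes>\<^bsub>P\<^esub> y
             \<otimes>\<^bsub>P\<^esub> inv\<^bsub>P\<^esub> z \<otimes>\<^bsub>P\<^esub> u3 \<otimes>\<^bsub>P\<^esub> z))"

definition S4 :: "('a, 'b) monoid_scheme \<Rightarrow> bool" where
  "S4 P \<longleftrightarrow> (\<exists>u1\<in>carrier P. \<exists>u2\<in>carrier P. \<exists>u3\<in>carrier P.
      u1 \<noteq> \<one>\<^bsub>P\<^esub> \<and> u2 \<noteq> \<one>\<^bsub>P\<^esub> \<and> u3 \<noteq> \<one>\<^bsub>P\<^esub> \<and>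
      \<not> (\<exists>x\<in>carrier P. \<exists>y\<in>carrier P.
        u3 = inv\<^bsub>P\<^esub> x \<otimes>\<^bsub>P\<^esub> inv\<^bsub>P\<^esub> u2 \<otimes>\<^bsub>P\<^esub> x \<otimes>\<^bsub>P\<^esub> inv\<^bsub>P\<^esub> y
             \<otimes>\<^bsub>P\<^esub> inv\<^bsub>P\<^esub> u1 \<otimes>\<^bsub>P\<^esub> y))"

text \<open>The restricted direct sum H = \<Oplus>_{i\<in>\<int>} P: finitely supported sequences.\<close>

definition fsseq :: "('a, 'b) monoid_scheme \<Rightarrow> (int \<Rightarrow> 'a) set" where
  "fsseq P = {h. (\<forall>i. h i \<in> carrier P) \<and> finite {i. h i \<noteq> \<one>\<^bsub>P\<^esub>}}"

definition smult :: "('a, 'b) monoid_scheme \<Rightarrow> (int \<Rightarrow> 'a) \<Rightarrow> (int \<Rightarrow> 'a) \<Rightarrow> (int \<Rightarrow> 'a)" where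
  "smult P g h = (\<lambda>i. g i \<otimes>\<^bsub>P\<^esub> h i)"

definition sinv :: "('a, 'b) monoid_scheme \<Rightarrow> (int \<Rightarrow> 'a) \<Rightarrow> (int \<Rightarrow> 'a)" where
  "sinv P g = (\<lambda>i. inv\<^bsub>P\<^esub> (g i))"

definition shift :: "(int \<Rightarrow> 'a) \<Rightarrow> (int \<Rightarrow> 'a)" where
  "shift h = (\<lambda>i. h (i + 1))"

end

theory Submission
  imports Defs
begin

lemma foldr_carrier:
  assumes "group P" "\<And>i. h i \<in> carrier P"
  shows "foldr (\<lambda>j acc. h j \<otimes>\<^bsub>P\<^esub> acc) xs \<one>\<^bsub>P\<^esub> \<in> carrier P"
proof -
  interpret group P by fact
  show ?thesis by (induction xs) (auto simp: assms)
qed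

lemma grp_cancel1:
  assumes "group P" "x \<in> carrier P" "z \<in> carrier P"
  shows "x \<otimes>\<^bsub>P\<^esub> (inv\<^bsub>P\<^esub> x \<otimes>\<^bsub>P\<^esub> z) = z"
    and "inv\<^bsub>P\<^esub> x \<otimes>\<^bsub>P\<^esub> (x \<otimes>\<^bsub>P\<^esub> z) = z"
proof -
  interpret group P by fact
  show "x \<otimes>\<^bsub>P\<^esub> (inv\<^bsub>P\<^esub> x \<otimes>\<^bsub>P\<^esub> z) = z"
    using assms by (simp add: m_assoc[symmetric])
  show "inv\<^bsub>P\<^esub> x \<otimes>\<^bsub>P\<^esub> (x \<otimes>\<^bsub>P\<^esub> z) = z"
    using assms by (simp add: m_assoc[symmetric])
qed

lemma part1:
  assumes G: "group P" and S1: "S1 P" and h: "h \<in> fsseq P"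
  shows "\<exists>g1\<in>fsseq P. \<exists>g2\<in>fsseq P.
            h = smult P (smult P (smult P g1 (shift (sinv P g1))) g2) (shift (sinv P g2))"
proof -
  interpret group P by fact
  have hc: "\<And>i. h i \<in> carrier P" and fin: "finite {i. h i \<noteq> \<one>\<^bsub>P\<^esub>}"
    using h by (auto simp: fsseq_def)
  obtain m where m: "\<And>i. i < m \<Longrightarrow> h i = \<one>\<^bsub>P\<^esub>"
  proof -
    from bdd_below_finite[OF fin] obtain m where "\<forall>x\<in>{i. h i \<noteq> \<one>\<^bsub>P\<^esub>}. m \<le> x"
      unfolding bdd_below_def by blast
    then show ?thesis using that by (metis (mono_tags, lifting) mem_Collect_eq not_le)
  qed
  obtain M where M: "\<And>i. M < i \<Longrightarrow> h i = \<one>\<^bsub>P\<^esub>"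
  proof -
    from bdd_above_finite[OF fin] obtain M where "\<forall>x\<in>{i. h i \<noteq> \<one>\<^bsub>P\<^esub>}. x \<le> M"
      unfolding bdd_above_def by blast
    then show ?thesis using that by (metis (mono_tags, lifting) mem_Collect_eq not_le)
  qed
  define F where "F i = foldr (\<lambda>j acc. h j \<otimes>\<^bsub>P\<^esub> acc) [i..M] \<one>\<^bsub>P\<^esub>" for i
  have Fc: "\<And>i. F i \<in> carrier P" unfolding F_def by (rule foldr_carrier[OF G hc])
  have Fbig: "\<And>i. M < i \<Longrightarrow> F i = \<one>\<^bsub>P\<^esub>" unfolding F_def by simp
  have Frec: "\<And>i. F i = h i \<otimes>\<^bsub>P\<^esub> F (i+1)"
  proof -
    fix i
    show "F i = h i \<otimes>\<^bsub>P\<^esub> F (i+1)"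
    proof (cases "i \<le> M")
      case True then show ?thesis unfolding F_def by (simp add: upto_rec1)
    next
      case False then show ?thesis using Fbig M by simp
    qed
  qed
  define a where "a = F (m+1)"
  have ac: "a \<in> carrier P" unfolding a_def by (rule Fc)
  obtain x y where xc: "x \<in> carrier P" and yc: "y \<in> carrier P" and
    hm: "h m = inv\<^bsub>P\<^esub> x \<otimes>\<^bsub>P\<^esub> inv\<^bsub>P\<^esub> a \<otimes>\<^bsub>P\<^esub> y \<otimes>\<^bsub>P\<^esub> x \<otimes>\<^bsub>P\<^esub> inv\<^bsub>P\<^esub> y"
    using S1 ac hc[of m] unfolding S1_def by blast
  define g1 where "g1 i = (if m+1 \<le> i then F i else if i = m then inv\<^bsub>P\<^esub> x
      else if i = m - 1 then y else \<one>\<^bsub>P\<^esub>)" for i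
  define g2 where "g2 i = (if i = m then y \<otimes>\<^bsub>P\<^esub> x \<otimes>\<^bsub>P\<^esub> inv\<^bsub>P\<^esub> y
      else if i = m - 1 then inv\<^bsub>P\<^esub> y else \<one>\<^bsub>P\<^esub>)" for i
  have g1c: "\<And>i. g1 i \<in> carrier P" unfolding g1_def using Fc xc yc by auto
  have g2c: "\<And>i. g2 i \<in> carrier P" unfolding g2_def using xc yc by auto
  have "{i. g1 i \<noteq> \<one>\<^bsub>P\<^esub>} \<subseteq> {m-1..max m M}" unfolding g1_def using Fbig by (auto simp: max_def; meson not_le)
  then have f1: "g1 \<in> fsseq P" unfolding fsseq_def using g1c finite_subset by auto
  have "{i. g2 i \<noteq> \<one>\<^bsub>P\<^esub>} \<subseteq> {m-1..m}" unfolding g2_def by auto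
  then have f2: "g2 \<in> fsseq P" unfolding fsseq_def using g2c finite_subset by auto
  have "h i = g1 i \<otimes>\<^bsub>P\<^esub> inv\<^bsub>P\<^esub> (g1 (i+1)) \<otimes>\<^bsub>P\<^esub> g2 i \<otimes>\<^bsub>P\<^esub> inv\<^bsub>P\<^esub> (g2 (i+1))" for i
  proof -
    consider "m+1 \<le> i" | "i = m" | "i = m - 1" | "i = m - 2" | "i < m - 2" by linarith
    then show ?thesis
    proof cases
      case 1
      then show ?thesis unfolding g1_def g2_def using Frec[of i] Fc hc
        by (simp add: m_assoc a_def)
    next
      case 2
      then show ?thesis unfolding g1_def g2_def using hm xc yc ac Fc[of "m+1"]
        by (simp add: m_assoc a_def)
    next
      case 3
      then show ?thesis unfolding g1_def g2_def using m[of i] xc yc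
        by (simp add: m_assoc inv_mult_group grp_cancel1[OF G])
    next
      case 4
      then show ?thesis unfolding g1_def g2_def using m[of i] xc yc
        by (simp add: m_assoc inv_mult_group grp_cancel1[OF G])
    next
      case 5
      then show ?thesis unfolding g1_def g2_def using m[of i] xc yc
        by (simp add: m_assoc inv_mult_group grp_cancel1[OF G])
    qed
  qed
  then have "h = smult P (smult P (smult P g1 (shift (sinv P g1))) g2) (shift (sinv P g2))"
    unfolding smult_def shift_def sinv_def by auto
  then show ?thesis using f1 f2 by blast
qed

lemma fsseq_reflect:
  assumes "g \<in> fsseq P"
  shows "(\<lambda>i. g (c - i)) \<in> fsseq P"
proof -
  have "{i. g (c - i) \<noteq> \<one>\<^bsub>P\<^esub>} = (\<lambda>i. c - i) -` {i. g i \<noteq> \<one>\<^bsub>P\<^esub>}" by auto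
  moreover have "inj (\<lambda>i::int. c - i)" by (rule injI) simp
  moreover have "finite {i. g i \<noteq> \<one>\<^bsub>P\<^esub>}" using assms unfolding fsseq_def by auto
  ultimately have "finite {i. g (c - i) \<noteq> \<one>\<^bsub>P\<^esub>}"
    by (metis finite_vimageI)
  then show ?thesis using assms unfolding fsseq_def by auto
qed

theorem lemma4p4:
  fixes P :: "('a, 'b) monoid_scheme"
  assumes "group P" and "finite (carrier P)"
    and "S1 P" and "S2 P" and "S3 P" and "S4 P"
    and "h \<in> fsseq P"
  shows "(\<exists>g1\<in>fsseq P. \<exists>g2\<in>fsseq P.
            h = smult P (smult P (smult P g1 (shift (sinv P g1))) g2) (shift (sinv P g2)))
       \<and> (\<exists>g1\<in>fsseq P. \<exists>g2\<in>fsseq P.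
            h = smult P (smult P (smult P (shift g1) (sinv P g1)) (shift g2)) (sinv P g2))"
proof
  show "\<exists>g1\<in>fsseq P. \<exists>g2\<in>fsseq P.
            h = smult P (smult P (smult P g1 (shift (sinv P g1))) g2) (shift (sinv P g2))"
    using part1 assms by blast
  have "(\<lambda>j. h (-1 - j)) \<in> fsseq P" by (rule fsseq_reflect[OF assms(7)])
  then obtain g1 g2 where g1: "g1 \<in> fsseq P" and g2: "g2 \<in> fsseq P" and
    e: "(\<lambda>j. h (-1 - j)) = smult P (smult P (smult P g1 (shift (sinv P g1))) g2) (shift (sinv P g2))"
    using part1 assms by blast
  have "h i = g1 (-i - 1) \<otimes>\<^bsub>P\<^esub> inv\<^bsub>P\<^esub> (g1 (-i)) \<otimes>\<^bsub>P\<^esub> g2 (-i - 1)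
     \<otimes>\<^bsub>P\<^esub> inv\<^bsub>P\<^esub> (g2 (-i))" for i
    using fun_cong[OF e, of "-i - 1"] unfolding smult_def shift_def sinv_def by simp
  then have "h = smult P (smult P (smult P (shift (\<lambda>i. g1 (0 - i))) (sinv P (\<lambda>i. g1 (0 - i))))
      (shift (\<lambda>i. g2 (0 - i)))) (sinv P (\<lambda>i. g2 (0 - i)))"
    unfolding smult_def shift_def sinv_def by (auto simp: algebra_simps)
  then show "\<exists>g1\<in>fsseq P. \<exists>g2\<in>fsseq P.
            h = smult P (smult P (smult P (shift g1) (sinv P g1)) (shift g2)) (sinv P g2)"
    using fsseq_reflect[OF g1] fsseq_reflect[OF g2] by blast
qed

end
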